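(* Let $K\subset\mathbb R^m$ be compact, let $B$ be a linear subspace of $C(K)$ such that $B=B_{\mathbb R}+iB_{\mathbb R}$ where $B_{\mathbb R}:=B\cap C_{\mathbb R}(K)$ (i.e., $B$ has a basis of real-valued functions). Let $L$ be a bounded linear operator on $B$ with $L:B\to C(K)$ and $L(B_{\mathbb R})\subseteq C_{\mathbb R}(K)$, and let $\|\cdot\|$ be a monotone norm on $B$ (i.e., $g,h\in B$ and $|g(x)|\le|h(x)|$ for all $x\in K$ imply $\|g\|\le\|h\|$). Then $$\sup_{h\in B\setminus\{0\}}\frac{\|L(h)\|_{C(K)}}{\|h\|}=\sup_{g\in B_{\mathbb R}\setminus\{0\}}\frac{\|L(g)\|_{C_{\mathbb R}(K)}}{\|g\|}.$$
   Context: $C(K)$ is the space of continuous complex-valued functions on $K$ with the maximum norm, $C_{\mathbb R}(K)$ its subspace of real-valued functions. *)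

theory Defs
  imports "HOL-Analysis.Analysis"
begin

text \<open>Elements of C(K) are represented as functions 'a => complex that are continuous
on K and vanish outside K (so that equality of functions is equality on K).\<close>

definition CK :: "'a::topological_space set \<Rightarrow> ('a \<Rightarrow> complex) set" where
  "CK K = {f. continuous_on K f \<and> (\<forall>x. x \<notin> K \<longrightarrow> f x = 0)}"

definition CRK :: "'a::topological_space set \<Rightarrow> ('a \<Rightarrow> complex) set" where
  "CRK K = {f \<in> CK K. \<forall>x. Im (f x) = 0}"

definition supnorm :: "'a set \<Rightarrow> ('a \<Rightarrow> complex) \<Rightarrow> real" where
  "supnorm K f = (SUP x\<in>K. cmod (f x))"

definition real_part_space :: "('a \<Rightarrow> complex) set \<Rightarrow> ('a \<Rightarrow> complex) set" where
  "real_part_space B = {f \<in> B. \<forall>x. Im (f x) = 0}"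

definition complex_subspace :: "('a \<Rightarrow> complex) set \<Rightarrow> bool" where
  "complex_subspace B \<longleftrightarrow> (\<lambda>x. 0) \<in> B \<and> (\<forall>f\<in>B. \<forall>g\<in>B. (\<lambda>x. f x + g x) \<in> B)
     \<and> (\<forall>c::complex. \<forall>f\<in>B. (\<lambda>x. c * f x) \<in> B)"

definition complex_linear_on :: "('a \<Rightarrow> complex) set \<Rightarrow> (('a \<Rightarrow> complex) \<Rightarrow> ('a \<Rightarrow> complex)) \<Rightarrow> bool" where
  "complex_linear_on B L \<longleftrightarrow> (\<forall>f\<in>B. \<forall>g\<in>B. L (\<lambda>x. f x + g x) = (\<lambda>x. L f x + L g x))
     \<and> (\<forall>c::complex. \<forall>f\<in>B. L (\<lambda>x. c * f x) = (\<lambda>x. c * L f x))"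

definition norm_on :: "('a \<Rightarrow> complex) set \<Rightarrow> (('a \<Rightarrow> complex) \<Rightarrow> real) \<Rightarrow> bool" where
  "norm_on B N \<longleftrightarrow> (\<forall>f\<in>B. N f \<ge> 0) \<and> (\<forall>f\<in>B. N f = 0 \<longleftrightarrow> f = (\<lambda>x. 0))
     \<and> (\<forall>c::complex. \<forall>f\<in>B. N (\<lambda>x. c * f x) = cmod c * N f)
     \<and> (\<forall>f\<in>B. \<forall>g\<in>B. N (\<lambda>x. f x + g x) \<le> N f + N g)"

definition monotone_norm_on :: "'a set \<Rightarrow> ('a \<Rightarrow> complex) set \<Rightarrow> (('a \<Rightarrow> complex) \<Rightarrow> real) \<Rightarrow> bool" where
  "monotone_norm_on K B N \<longleftrightarrow> norm_on B N \<and>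
     (\<forall>g\<in>B. \<forall>h\<in>B. (\<forall>x\<in>K. cmod (g x) \<le> cmod (h x)) \<longrightarrow> N g \<le> N h)"

end

theory Submission
  imports Defs
begin

lemma supnorm_upper:
  assumes "compact K" "f \<in> CK K" "x \<in> K"
  shows "cmod (f x) \<le> supnorm K f"
proof -
  have "continuous_on K (\<lambda>x. cmod (f x))"
    using assms(2) by (auto simp: CK_def intro: continuous_intros)
  hence "compact ((\<lambda>x. cmod (f x)) ` K)" using assms(1) compact_continuous_image by blast
  hence "bdd_above ((\<lambda>x. cmod (f x)) ` K)" by (simp add: bounded_imp_bdd_above compact_imp_bounded)
  thus ?thesis unfolding supnorm_def using assms(3) by (rule cSUP_upper2) simp
qed

lemma supnorm_nonneg:
  assumes "compact K" "f \<in> CK K" "K \<noteq> {}"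
  shows "0 \<le> supnorm K f"
proof -
  obtain x where "x \<in> K" using assms by auto
  have "0 \<le> cmod (f x)" by simp
  also have "\<dots> \<le> supnorm K f" using supnorm_upper[OF assms(1,2) \<open>x\<in>K\<close>] .
  finally show ?thesis .
qed

lemma cs_ineq:
  fixes p q x y :: real
  assumes "p\<^sup>2 + q\<^sup>2 = 1"
  shows "abs (p*x + q*y) \<le> sqrt (x\<^sup>2 + y\<^sup>2)"
proof -
  have e: "(p*x+q*y)\<^sup>2 + (p*y - q*x)\<^sup>2 = (p\<^sup>2+q\<^sup>2)*(x\<^sup>2+y\<^sup>2)" by (simp add: power2_eq_square algebra_simps)
  have z: "(p*y - q*x)\<^sup>2 \<ge> 0" by simp
  have e2: "(p*x+q*y)\<^sup>2 + (p*y - q*x)\<^sup>2 = x\<^sup>2 + y\<^sup>2" using e assms by simp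
  have "(p*x+q*y)\<^sup>2 \<le> x\<^sup>2 + y\<^sup>2" using z e2 by linarith
  hence "sqrt ((p*x+q*y)\<^sup>2) \<le> sqrt (x\<^sup>2 + y\<^sup>2)" by (rule real_sqrt_le_mono)
  thus ?thesis by (simp only: real_sqrt_abs)
qed

theorem lemmaL2:
  fixes K :: "'a::euclidean_space set"
    and B :: "('a \<Rightarrow> complex) set"
    and L :: "('a \<Rightarrow> complex) \<Rightarrow> ('a \<Rightarrow> complex)"
    and N :: "('a \<Rightarrow> complex) \<Rightarrow> real"
  assumes "compact K"
    and "B \<subseteq> CK K" and "complex_subspace B"
    and "\<forall>h\<in>B. \<exists>g1\<in>real_part_space B. \<exists>g2\<in>real_part_space B. h = (\<lambda>x. g1 x + \<i> * g2 x)"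
    and "monotone_norm_on K B N"
    and "complex_linear_on B L"
    and "L ` B \<subseteq> CK K" and "L ` real_part_space B \<subseteq> CRK K"
    and "\<exists>C. \<forall>h\<in>B. supnorm K (L h) \<le> C * N h"
  shows "(SUP h\<in>B - {\<lambda>x. 0}. supnorm K (L h) / N h)
       = (SUP g\<in>real_part_space B - {\<lambda>x. 0}. supnorm K (L g) / N g)"
proof -
  define Z where "Z = (\<lambda>x::'a. 0::complex)"
  define R where "R = real_part_space B"
  have RB: "R \<subseteq> B" by (auto simp: R_def real_part_space_def)
  have sub0: "Z \<in> B" and subadd: "\<And>f g. f\<in>B \<Longrightarrow> g\<in>B \<Longrightarrow> (\<lambda>x. f x + g x) \<in> B"
    and submul: "\<And>c f. f\<in>B \<Longrightarrow> (\<lambda>x. c * f x) \<in> B"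
    using assms(3) by (auto simp: complex_subspace_def Z_def)
  have Ladd: "\<And>f g. f\<in>B \<Longrightarrow> g\<in>B \<Longrightarrow> L (\<lambda>x. f x + g x) = (\<lambda>x. L f x + L g x)"
    and Lmul: "\<And>c f. f\<in>B \<Longrightarrow> L (\<lambda>x. c * f x) = (\<lambda>x. c * L f x)"
    using assms(6) by (auto simp: complex_linear_on_def)
  have N0: "\<And>f. f\<in>B \<Longrightarrow> N f = 0 \<longleftrightarrow> f = Z" and Nnn: "\<And>f. f\<in>B \<Longrightarrow> N f \<ge> 0"
    and Nmono: "\<And>g h. g\<in>B \<Longrightarrow> h\<in>B \<Longrightarrow> (\<forall>x\<in>K. cmod (g x) \<le> cmod (h x)) \<Longrightarrow> N g \<le> N h"
    using assms(5) by (auto simp: monotone_norm_on_def norm_on_def Z_def)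
  have Npos: "\<And>f. f \<in> B - {Z} \<Longrightarrow> N f > 0" 
  proof -
    fix f assume f: "f \<in> B - {Z}"
    hence "N f \<noteq> 0" using N0 by blast
    thus "N f > 0" using Nnn f by (simp add: order_less_le)
  qed
  obtain C where C: "\<forall>h\<in>B. supnorm K (L h) \<le> C * N h" using assms(9) by blast
  have ratioC: "\<And>h. h \<in> B - {Z} \<Longrightarrow> supnorm K (L h) / N h \<le> C"
  proof -
    fix h assume h: "h \<in> B - {Z}"
    show "supnorm K (L h) / N h \<le> C" using C h Npos[OF h] by (simp add: pos_divide_le_eq mult.commute)
  qed
  show ?thesis
  proof (cases "B - {Z} = {}")
    case True
    hence "R - {Z} = {}" using RB by blast
    hence "(SUP g\<in>R - {Z}. supnorm K (L g) / N g) = (SUP h\<in>B - {Z}. supnorm K (L h) / N h)"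
      using True by (simp only: image_empty)
    thus ?thesis unfolding Z_def R_def by simp
  next
    case False
    then obtain h0 where h0: "h0 \<in> B" "h0 \<noteq> Z" by blast
    have Kne: "K \<noteq> {}"
    proof
      assume "K = {}"
      hence "h0 = Z" using h0 assms(2) by (auto simp: CK_def Z_def)
      thus False using h0 by simp
    qed
    obtain g1 g2 where g: "g1 \<in> R" "g2 \<in> R" "h0 = (\<lambda>x. g1 x + \<i> * g2 x)"
      using assms(4) h0 unfolding R_def by blast
    have Rne: "R - {Z} \<noteq> {}"
    proof
      assume "R - {Z} = {}"
      hence "g1 = Z" "g2 = Z" using g by auto
      thus False using g h0 by (auto simp: Z_def)
    qed
    define S where "S = (SUP g\<in>R - {Z}. supnorm K (L g) / N g)"
    have bddR: "bdd_above ((\<lambda>g. supnorm K (L g) / N g) ` (R - {Z}))"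
      using ratioC RB by (intro bdd_aboveI2[of _ _ C]) auto
    have bddB: "bdd_above ((\<lambda>g. supnorm K (L g) / N g) ` (B - {Z}))"
      using ratioC by (intro bdd_aboveI2[of _ _ C]) auto
    have LR: "\<And>g. g \<in> R \<Longrightarrow> L g \<in> CRK K" using assms(8) unfolding R_def by blast
    have LB: "\<And>g. g \<in> B \<Longrightarrow> L g \<in> CK K" using assms(7) by blast
    have Sge: "\<And>g. g \<in> R - {Z} \<Longrightarrow> supnorm K (L g) / N g \<le> S"
      unfolding S_def by (rule cSUP_upper[OF _ bddR])
    have S0: "0 \<le> S"
    proof -
      obtain g where gg: "g \<in> R - {Z}" using Rne by blast
      have gB: "g \<in> B" using gg RB by auto
      have "0 \<le> supnorm K (L g)" using supnorm_nonneg[OF assms(1) LB[OF gB] Kne] .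
      moreover have "0 < N g" using Npos gg gB by auto
      ultimately have "0 \<le> supnorm K (L g) / N g" by simp
      thus ?thesis using Sge[OF gg] by linarith
    qed
    have LZ: "L Z = Z"
      using Lmul[of Z 0] sub0 by (simp add: Z_def)
    have key: "\<And>g. g \<in> R \<Longrightarrow> supnorm K (L g) \<le> S * N g"
    proof -
      fix g assume gR: "g \<in> R"
      show "supnorm K (L g) \<le> S * N g"
      proof (cases "g = Z")
        case True
        have "supnorm K (L g) = 0" using True LZ Kne by (simp add: supnorm_def Z_def)
        moreover have "N g = 0" using True N0[OF sub0] by simp
        ultimately show ?thesis by simp
      next
        case False
        hence gg: "g \<in> R - {Z}" using gR by simp
        have "supnorm K (L g) / N g \<le> S" using Sge[OF gg] .
        thus ?thesis using Npos gg RB by (auto simp: pos_divide_le_eq)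
      qed
    qed
    have main: "\<And>h. h \<in> B - {Z} \<Longrightarrow> supnorm K (L h) \<le> S * N h"
    proof -
      fix h assume hB: "h \<in> B - {Z}"
      obtain g1 g2 where g: "g1 \<in> R" "g2 \<in> R" "h = (\<lambda>x. g1 x + \<i> * g2 x)"
        using assms(4) hB unfolding R_def by blast
      have g1B: "g1 \<in> B" and g2B: "g2 \<in> B" using g RB by auto
      have Lh: "L h = (\<lambda>x. L g1 x + \<i> * L g2 x)"
        using g(3) Ladd[OF g1B submul[OF g2B]] Lmul[OF g2B] by simp
      have pt: "cmod (L h x) \<le> S * N h" if xK: "x \<in> K" for x
      proof -
        define a where "a = Re (L g1 x)"
        define b where "b = Re (L g2 x)"
        have La: "L g1 x = complex_of_real a" using LR[OF g(1)] by (simp add: CRK_def a_def complex_eq_iff)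
        have Lb: "L g2 x = complex_of_real b" using LR[OF g(2)] by (simp add: CRK_def b_def complex_eq_iff)
        define r where "r = sqrt (a\<^sup>2 + b\<^sup>2)"
        have Lhx: "cmod (L h x) = r" unfolding Lh r_def La Lb
          by (simp add: cmod_def)
        show ?thesis
        proof (cases "r = 0")
          case True
          thus ?thesis using Lhx S0 Nnn hB by simp
        next
          case False
          have "r \<ge> 0" unfolding r_def by simp
          hence rpos: "r > 0" using False by linarith
          define c where "c = a / r"
          define s where "s = b / r"
          have r2: "r\<^sup>2 = a\<^sup>2 + b\<^sup>2" unfolding r_def by simp
          have "c\<^sup>2 + s\<^sup>2 = (a\<^sup>2 + b\<^sup>2) / r\<^sup>2" unfolding c_def s_def
            by (simp add: power_divide add_divide_distrib)
          also have "\<dots> = r\<^sup>2 / r\<^sup>2" using r2 by simp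
          also have "\<dots> = 1" using rpos by simp
          finally have cs: "c\<^sup>2 + s\<^sup>2 = 1" .
          define gg where "gg = (\<lambda>y. complex_of_real c * g1 y + complex_of_real s * g2 y)"
          have ggB: "gg \<in> B" unfolding gg_def using subadd submul g1B g2B by blast
          have ggR: "gg \<in> R" using ggB g(1,2)
            by (simp add: R_def real_part_space_def gg_def)
          have Lgg: "L gg x = complex_of_real (c*a + s*b)"
            unfolding gg_def using Ladd[OF submul[OF g1B] submul[OF g2B]] Lmul[OF g1B] Lmul[OF g2B] La Lb
            by simp
          have "c*a + s*b = (a\<^sup>2 + b\<^sup>2) / r" unfolding c_def s_def
            by (simp add: power2_eq_square add_divide_distrib)
          also have "\<dots> = r\<^sup>2 / r" using r2 by simp
          also have "\<dots> = r" using rpos by (simp add: power2_eq_square)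
          finally have "c*a + s*b = r" .
          hence "cmod (L h x) = cmod (L gg x)" using Lgg Lhx rpos by simp
          also have "\<dots> \<le> supnorm K (L gg)" using supnorm_upper[OF assms(1) LB[OF ggB] xK] .
          also have "\<dots> \<le> S * N gg" using key[OF ggR] .
          also have "\<dots> \<le> S * N h"
          proof (rule mult_left_mono[OF _ S0], rule Nmono[OF ggB])
            show "h \<in> B" using hB by simp
            show "\<forall>y\<in>K. cmod (gg y) \<le> cmod (h y)"
            proof
              fix y assume "y \<in> K"
              define uu where "uu = Re (g1 y)"
              define vv where "vv = Re (g2 y)"
              have gu: "g1 y = complex_of_real uu" using g(1) by (simp add: R_def real_part_space_def uu_def complex_eq_iff)
              have gv: "g2 y = complex_of_real vv" using g(2) by (simp add: R_def real_part_space_def vv_def complex_eq_iff)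
              have "cmod (gg y) = abs (c * uu + s * vv)" unfolding gg_def gu gv
                by (metis norm_of_real of_real_add of_real_mult)
              also have "\<dots> \<le> sqrt (uu\<^sup>2 + vv\<^sup>2)" using cs by (rule cs_ineq)
              also have "\<dots> = cmod (h y)" unfolding g(3) gu gv by (simp add: cmod_def)
              finally show "cmod (gg y) \<le> cmod (h y)" .
            qed
          qed
          finally show ?thesis .
        qed
      qed
      show "supnorm K (L h) \<le> S * N h" unfolding supnorm_def using Kne pt by (rule cSUP_least)
    qed
    have le1: "(SUP h\<in>B - {Z}. supnorm K (L h) / N h) \<le> S"
    proof (rule cSUP_least)
      show "B - {Z} \<noteq> {}" using False .
      fix h assume hB: "h \<in> B - {Z}"
      show "supnorm K (L h) / N h \<le> S" using main[OF hB] Npos[OF hB] by (simp add: pos_divide_le_eq)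
    qed
    have le2: "S \<le> (SUP h\<in>B - {Z}. supnorm K (L h) / N h)"
      unfolding S_def using Rne RB bddB by (intro cSUP_subset_mono) auto
    show ?thesis using le1 le2 unfolding S_def Z_def R_def by linarith
  qed
qed

end
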